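(* Let $P(\theta,z)=(\theta+\alpha,p_\theta(z))$ be a fibred polynomial dynamics over an irrational rotation and let $\Gamma$ be an attracting invariant multi-curve for $P$. Then its basin of attraction $$\mathcal{A}(\Gamma)=\{(\theta,z)\in\mathbb{T}^1\times\mathbb{C}:\ \operatorname{dist}(P^k(\theta,z),\Gamma)\to0 \text{ as } k\to\infty\}$$ is an open subset of $\mathbb{T}^1\times\mathbb{C}$.
   Context: $\mathbb{T}^1=\mathbb{R}/\mathbb{Z}$, $\langle x\rangle$ is the fractional part. A fibred polynomial dynamics over an irrational rotation is a continuous map $P(\theta,z)=(\theta+\alpha,p_\theta(z))$ with $\alpha$ irrational and $p_\theta$ polynomials with coefficients continuous in $\theta$. An $n$-curve is a set $\Gamma=\{(\langle n\theta\rangle,\tilde\gamma(\theta)):\theta\in\mathbb{T}^1\}$ with $\tilde\gamma:\mathbb{T}^1\to\mathbb{C}$ continuous injective; a multi-curve here means such an $n$-curve. $\Gamma$ is invariant for $P$ if for some such $\tilde\gamma$ and some $\tau\in\{0,\dots,n-1\}$, $p_{\langle n\theta\rangle}(\tilde\gamma(\theta))=\tilde\gamma(\theta+\tfrac{\alpha+\tau}{n})$ for all $\theta$; it is attracting if $\exp\big(\int_{\mathbb{T}^1}\log|p'_{\langle n\theta\rangle}(\tilde\gamma(\theta))|\,d\theta\big)<1$ (integrand in $L^1$). *)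

theory Defs
  imports "HOL-Analysis.Analysis" "HOL-Computational_Algebra.Polynomial"
begin

text \<open>The circle T^1 = R/Z is represented through 1-periodic lifts to R.
  Points of T^1 x C are represented by points of R x C; a subset of T^1 x C
  corresponds to a subset of R x C invariant under (x,z) |-> (x+1,z).
  Openness in T^1 x C is equivalent to openness of the lifted set in R x C,
  and the distance in T^1 x C to a set equals the distance in R x C to its
  (periodic) lift.\<close>

definition fibred_poly_dyn :: "real \<Rightarrow> (real \<Rightarrow> complex poly) \<Rightarrow> bool" where
  "fibred_poly_dyn \<alpha> p \<longleftrightarrow> \<alpha> \<notin> \<rat> \<and>
     (\<forall>\<theta>. p (\<theta> + 1) = p \<theta>) \<and>
     (\<forall>k. continuous_on UNIV (\<lambda>\<theta>. coeff (p \<theta>) k)) \<and>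
     (\<exists>d. \<forall>\<theta>. degree (p \<theta>) \<le> d)"

definition fibred_map :: "real \<Rightarrow> (real \<Rightarrow> complex poly) \<Rightarrow> real \<times> complex \<Rightarrow> real \<times> complex" where
  "fibred_map \<alpha> p = (\<lambda>(\<theta>, z). (\<theta> + \<alpha>, poly (p \<theta>) z))"

definition circle_embedding :: "(real \<Rightarrow> complex) \<Rightarrow> bool" where
  "circle_embedding \<gamma> \<longleftrightarrow> continuous_on UNIV \<gamma> \<and> (\<forall>\<theta>. \<gamma> (\<theta> + 1) = \<gamma> \<theta>) \<and>
     (\<forall>s t. \<gamma> s = \<gamma> t \<longrightarrow> s - t \<in> \<int>)"

text \<open>Lift to R x C of the n-curve {(<n theta>, gamma theta)}.\<close>
definition ncurve_lift :: "nat \<Rightarrow> (real \<Rightarrow> complex) \<Rightarrow> (real \<times> complex) set" where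
  "ncurve_lift n \<gamma> = {(x, \<gamma> \<theta>) | x \<theta>. x - real n * \<theta> \<in> \<int>}"

definition invariant_ncurve :: "(real \<Rightarrow> complex poly) \<Rightarrow> real \<Rightarrow> nat \<Rightarrow> (real \<Rightarrow> complex) \<Rightarrow> bool" where
  "invariant_ncurve p \<alpha> n \<gamma> \<longleftrightarrow> (\<exists>\<tau>\<in>{0..<n}. \<forall>\<theta>.
      poly (p (frac (real n * \<theta>))) (\<gamma> \<theta>) = \<gamma> (\<theta> + (\<alpha> + real \<tau>) / real n))"

definition attracting_ncurve :: "(real \<Rightarrow> complex poly) \<Rightarrow> nat \<Rightarrow> (real \<Rightarrow> complex) \<Rightarrow> bool" where
  "attracting_ncurve p n \<gamma> \<longleftrightarrow>
     (let f = (\<lambda>\<theta>. ln (cmod (poly (pderiv (p (frac (real n * \<theta>)))) (\<gamma> \<theta>)))) in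
       integrable (lebesgue_on {0..1}) f \<and> exp (integral\<^sup>L (lebesgue_on {0..1}) f) < 1)"

definition basin :: "real \<Rightarrow> (real \<Rightarrow> complex poly) \<Rightarrow> (real \<times> complex) set \<Rightarrow> (real \<times> complex) set" where
  "basin \<alpha> p \<Gamma> = {w. (\<lambda>k. infdist ((fibred_map \<alpha> p ^^ k) w) \<Gamma>) \<longlonglongrightarrow> 0}"

end

theory Submission
  imports Defs
begin

lemma periodic_int:
  assumes "\<And>x. f (x + 1) = f (x::real)"
  shows "f (x + real_of_int m) = f x"
proof -
  have "\<forall>x. f (x + real_of_int m) = f x"
  proof (induction m rule: int_induct[where k=0])
    case base then show ?case by simp
  next
    case (step1 i) then show ?case using assms by (metis add.assoc of_int_add of_int_1)
  next
    case (step2 i)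
    show ?case
    proof
      fix x
      have "f (x + real_of_int i) = f (x + real_of_int (i - 1))"
        using assms[of "x + real_of_int (i - 1)"] by (simp add: algebra_simps)
      then show "f (x + real_of_int (i - 1)) = f x" using step2 by simp
    qed
  qed
  then show ?thesis by blast
qed

lemma periodic_frac:
  assumes "\<And>x. f (x + 1) = f (x::real)"
  shows "f (frac x) = f x"
  using periodic_int[of f, OF assms, of x "- \<lfloor>x\<rfloor>"] by (simp add: frac_def)

lemma periodic_bounded:
  fixes f :: "real \<Rightarrow> 'a::real_normed_vector"
  assumes "continuous_on UNIV f" "\<And>x. f (x + 1) = f x"
  obtains B where "\<And>x. norm (f x) \<le> B"
proof -
  have "compact (f ` {0..1})"
    by (rule compact_continuous_image) (auto intro: continuous_on_subset[OF assms(1)])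
  then obtain B where B: "\<forall>y\<in>f ` {0..1}. norm y \<le> B"
    using compact_imp_bounded bounded_iff by metis
  have "norm (f x) \<le> B" for x
  proof -
    have "frac x \<in> {0..1}" using frac_lt_1[of x] frac_ge_0[of x] by simp
    then have "norm (f (frac x)) \<le> B" using B by blast
    then show ?thesis using periodic_frac[of f x, OF assms(2)] by simp
  qed
  then show ?thesis using that by blast
qed

lemma periodic_unif_cont:
  fixes f :: "real \<Rightarrow> 'a::metric_space"
  assumes "continuous_on UNIV f" "\<And>x. f (x + 1) = f x" "e > 0"
  obtains d where "d > 0" "\<And>x y. \<bar>x - y\<bar> < d \<Longrightarrow> dist (f x) (f y) < e"
proof -
  have "uniformly_continuous_on {-1..2} f"
    by (rule compact_uniformly_continuous) (auto intro: continuous_on_subset[OF assms(1)])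
  then obtain d where d: "d > 0" "\<forall>x\<in>{-1..2}. \<forall>x'\<in>{-1..2}. dist x' x < d \<longrightarrow> dist (f x') (f x) < e"
    using assms(3) unfolding uniformly_continuous_on_def by metis
  define d' where "d' = min d 1"
  have "dist (f x) (f y) < e" if "\<bar>x - y\<bar> < d'" for x y
  proof -
    define m where "m = \<lfloor>x\<rfloor>"
    have fx: "f x = f (x + real_of_int (-m))" using periodic_int[of f, OF assms(2)] by metis
    have fy: "f y = f (y + real_of_int (-m))" using periodic_int[of f, OF assms(2)] by metis
    have "x - m \<ge> 0" "x - m < 1" unfolding m_def by linarith+
    moreover have "\<bar>x - y\<bar> < 1" "\<bar>x - y\<bar> < d" using that d'_def by auto
    ultimately have "x - m \<in> {-1..2}" "y - m \<in> {-1..2}" "dist (x - m) (y - m) < d"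
      by (auto simp: dist_real_def)
    then show ?thesis using d(2) fx fy by (simp add: dist_commute)
  qed
  moreover have "d' > 0" using d d'_def by simp
  ultimately show ?thesis using that by blast
qed

lemma poly_sum_le:
  fixes z :: "'a::{comm_semiring_0,semiring_1}"
  assumes "degree q \<le> d"
  shows "poly q z = (\<Sum>i\<le>d. coeff q i * z ^ i)"
proof -
  have "poly q z = (\<Sum>i\<le>degree q. coeff q i * z ^ i)" by (rule poly_altdef)
  also have "\<dots> = (\<Sum>i\<le>d. coeff q i * z ^ i)"
    by (rule sum.mono_neutral_left) (use assms in \<open>auto simp: coeff_eq_0\<close>)
  finally show ?thesis .
qed

lemma poly_family_cont:
  fixes r :: "real \<Rightarrow> complex poly"
  assumes "\<And>k. continuous_on UNIV (\<lambda>\<theta>. coeff (r \<theta>) k)" "\<And>\<theta>. degree (r \<theta>) \<le> d"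
  shows "continuous_on UNIV (\<lambda>w. poly (r (fst w)) (snd w))"
proof -
  have eq: "(\<lambda>w. poly (r (fst w)) (snd w)) = (\<lambda>w. \<Sum>i\<le>d. coeff (r (fst w)) i * snd w ^ i)"
    using poly_sum_le[OF assms(2)] by auto
  show ?thesis unfolding eq
    by (intro continuous_intros continuous_on_compose2[OF assms(1)]) auto
qed


lemma pow_taylor2:
  fixes z v :: complex
  assumes R: "R \<ge> 1" "cmod z \<le> R" "cmod v \<le> R"
  shows "cmod (z^k - v^k - of_nat k * v^(k-1) * (z-v)) \<le> real k^2 * R^k * cmod (z-v)^2"
proof (induction k)
  case 0 then show ?case by simp
next
  case (Suc k)
  show ?case
  proof (cases k)
    case 0 then show ?thesis using R by simp
  next
    case (Suc j)
    have id: "z^(Suc k) - v^(Suc k) - of_nat (Suc k) * v^(Suc k - 1) * (z-v)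
       = z * (z^k - v^k - of_nat k * v^(k-1) * (z-v)) + of_nat k * v^(k-1) * (z-v)^2"
      using Suc by (simp add: algebra_simps power2_eq_square)
    let ?c = "cmod (z-v)^2"
    have "cmod (z^(Suc k) - v^(Suc k) - of_nat (Suc k) * v^(Suc k - 1) * (z-v))
        \<le> cmod z * cmod (z^k - v^k - of_nat k * v^(k-1) * (z-v)) + real k * cmod v^(k-1) * ?c"
      unfolding id by (rule order_trans[OF norm_triangle_ineq]) (simp add: norm_mult norm_power)
    also have "\<dots> \<le> R * (real k^2 * R^k * ?c) + real k * R^(k-1) * ?c"
      by (intro add_mono mult_mono Suc.IH power_mono mult_left_mono) (use R in auto)
    also have "\<dots> \<le> real (Suc k)^2 * R^(Suc k) * ?c"
    proof -
      have "R^(k-1) \<le> R^(Suc k)" using R(1) by (intro power_increasing) auto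
      then have "real k * R^(k-1) * ?c \<le> real k * R^(Suc k) * ?c"
        by (intro mult_right_mono mult_left_mono) auto
      moreover have "R * (real k^2 * R^k * ?c) + real k * R^(Suc k) * ?c \<le> real (Suc k)^2 * R^(Suc k) * ?c"
      proof -
        have "R * (real k^2 * R^k * ?c) + real k * R^(Suc k) * ?c = (real k^2 + real k) * (R^(Suc k) * ?c)"
          by (simp add: algebra_simps)
        also have "\<dots> \<le> real (Suc k)^2 * (R^(Suc k) * ?c)"
          using R(1) by (intro mult_right_mono) (auto simp: power2_eq_square algebra_simps)
        finally show ?thesis by simp
      qed
      ultimately show ?thesis by linarith
    qed
    finally show ?thesis .
  qed
qed

lemma poly_pderiv_sum:
  fixes r :: "complex poly"
  assumes "degree r \<le> d"
  shows "poly (pderiv r) v = (\<Sum>i\<le>d. coeff r i * (of_nat i * v^(i-1)))"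
proof -
  have eq: "poly r = (\<lambda>x. \<Sum>i\<le>d. coeff r i * x ^ i)" using poly_sum_le[OF assms] by auto
  have "DERIV (\<lambda>x. \<Sum>i\<le>d. coeff r i * x ^ i) v :> (\<Sum>i\<le>d. coeff r i * (of_nat i * v^(i-1)))"
    by (intro derivative_eq_intros) auto
  moreover have "DERIV (\<lambda>x. \<Sum>i\<le>d. coeff r i * x ^ i) v :> poly (pderiv r) v"
    using poly_DERIV[of r v] unfolding eq .
  ultimately show ?thesis using DERIV_unique by blast
qed

lemma poly_taylor2:
  fixes r :: "complex poly"
  assumes "degree r \<le> d" "\<And>i. cmod (coeff r i) \<le> Bc" "R \<ge> 1" "cmod z \<le> R" "cmod v \<le> R"
  shows "cmod (poly r z - poly r v - poly (pderiv r) v * (z - v))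
          \<le> (\<Sum>i\<le>d. Bc * real i^2 * R^i) * cmod (z-v)^2"
proof -
  have "poly r z - poly r v - poly (pderiv r) v * (z - v)
      = (\<Sum>i\<le>d. coeff r i * (z^i - v^i - of_nat i * v^(i-1) * (z-v)))"
    unfolding poly_sum_le[OF assms(1)] poly_pderiv_sum[OF assms(1)]
    by (simp only: sum_distrib_right sum_subtractf[symmetric]) (intro sum.cong, auto simp: algebra_simps)
  also have "cmod \<dots> \<le> (\<Sum>i\<le>d. cmod (coeff r i) * cmod (z^i - v^i - of_nat i * v^(i-1) * (z-v)))"
    by (rule order_trans[OF norm_sum]) (simp add: norm_mult)
  also have "\<dots> \<le> (\<Sum>i\<le>d. Bc * (real i^2 * R^i * cmod (z-v)^2))"
    using assms(2)[of 0] by (intro sum_mono mult_mono pow_taylor2 assms) (auto intro: order_trans[OF norm_ge_zero])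
  finally show ?thesis by (simp add: sum_distrib_right mult.assoc)
qed


lemma integral_lb_real:
  fixes h :: "real \<Rightarrow> real"
  assumes "continuous_on {a..b} h" "a \<le> b" "\<And>x. x \<in> {a..b} \<Longrightarrow> c \<le> h x"
  shows "c * (b - a) \<le> integral {a..b} h"
  using integral_component_lbound_real[of h a b c 1] assms integrable_continuous_interval[OF assms(1)]
  by simp

lemma integral_ub_real:
  fixes h :: "real \<Rightarrow> real"
  assumes "continuous_on {a..b} h" "a \<le> b" "\<And>x. x \<in> {a..b} \<Longrightarrow> h x \<le> c"
  shows "integral {a..b} h \<le> c * (b - a)"
  using integral_component_ubound_real[of h a b 1 c] assms integrable_continuous_interval[OF assms(1)]
  by simp

lemma integral_telescope:
  fixes h :: "real \<Rightarrow> real"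
  assumes "continuous_on UNIV h" "\<rho> \<ge> 0"
  shows "(\<Sum>l<L. integral {x0 + real l * \<rho>..x0 + real (Suc l) * \<rho>} h) = integral {x0..x0 + real L * \<rho>} h"
proof (induction L)
  case 0 then show ?case by simp
next
  case (Suc L)
  have "integral {x0..x0 + real L * \<rho>} h + integral {x0 + real L * \<rho>..x0 + real (Suc L) * \<rho>} h
      = integral {x0..x0 + real (Suc L) * \<rho>} h"
    by (rule Henstock_Kurzweil_Integration.integral_combine) (use assms in \<open>auto intro: integrable_continuous_interval continuous_on_subset simp: algebra_simps\<close>)
  then show ?case using Suc by simp
qed

lemma integral_periodic_shift:
  fixes h :: "real \<Rightarrow> real"
  assumes "continuous_on UNIV h" "\<And>x. h (x + 1) = h x" "x0 \<in> {0..1}"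
  shows "integral {x0..x0 + 1} h = integral {0..1} h"
proof -
  have c: "h integrable_on {a..b}" for a b
    by (rule integrable_continuous_interval) (use assms(1) continuous_on_subset in blast)
  have "integral {x0..1} h + integral {1..x0 + 1} h = integral {x0..x0 + 1} h"
    using assms(3) by (intro Henstock_Kurzweil_Integration.integral_combine c) auto
  moreover have "integral {1..x0+1} h = integral {0..x0} h"
  proof -
    have "integral {0..x0} (h \<circ> (+) 1) = integral {0 + 1..x0 + 1} h" by (rule integral_shift_Icc_real)
    moreover have "h \<circ> (+) 1 = h" using assms(2) by (auto simp: add.commute)
    ultimately show ?thesis by simp
  qed
  moreover have "integral {0..x0} h + integral {x0..1} h = integral {0..1} h"
    using assms(3) by (intro Henstock_Kurzweil_Integration.integral_combine c) auto
  ultimately show ?thesis by linarith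
qed

lemma riemann_bound:
  fixes h :: "real \<Rightarrow> real"
  assumes cont: "continuous_on UNIV h" and per: "\<And>x. h (x + 1) = h x"
    and int0: "integral {0..1} h = 0" and bnd: "\<And>x. \<bar>h x\<bar> \<le> B"
    and uc: "\<And>x y. x \<in> {0..2} \<Longrightarrow> y \<in> {0..2} \<Longrightarrow> \<bar>x - y\<bar> \<le> \<rho> \<Longrightarrow> \<bar>h x - h y\<bar> \<le> e"
    and rho: "\<rho> > 0" "real L * \<rho> \<le> 1" "1 \<le> real (Suc L) * \<rho>" and x0: "x0 \<in> {0..1}"
  shows "(\<Sum>l<L. h (x0 + real l * \<rho>)) \<le> B + e * real L"
proof -
  have cs: "continuous_on S h" for S using cont continuous_on_subset by blast
  have step: "\<rho> * h (x0 + real l * \<rho>) \<le> integral {x0 + real l * \<rho>..x0 + real (Suc l) * \<rho>} h + \<rho> * e"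
    if "l < L" for l
  proof -
    let ?u = "x0 + real l * \<rho>"
    have "real (Suc l) * \<rho> \<le> real L * \<rho>" using that rho by (intro mult_right_mono) auto
    moreover have "0 \<le> x0" "x0 \<le> 1" using x0 by auto
    ultimately have up: "x0 + real (Suc l) * \<rho> \<le> 2" using rho by linarith
    have u0: "?u \<ge> 0" using x0 rho by auto
    have "(h ?u - e) * ((x0 + real (Suc l) * \<rho>) - ?u) \<le> integral {?u..x0 + real (Suc l) * \<rho>} h"
    proof (rule integral_lb_real[OF cs])
      show "?u \<le> x0 + real (Suc l) * \<rho>" using rho by (simp add: algebra_simps)
      fix y assume y: "y \<in> {?u..x0 + real (Suc l) * \<rho>}"
      have "\<bar>h y - h ?u\<bar> \<le> e"
        by (rule uc) (use y up u0 in \<open>auto simp: algebra_simps\<close>)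
      then show "h ?u - e \<le> h y" by linarith
    qed
    then show ?thesis by (simp add: algebra_simps)
  qed
  have "\<rho> * (\<Sum>l<L. h (x0 + real l * \<rho>)) \<le> (\<Sum>l<L. integral {x0 + real l * \<rho>..x0 + real (Suc l) * \<rho>} h + \<rho> * e)"
    unfolding sum_distrib_left by (intro sum_mono step) auto
  also have "\<dots> = integral {x0..x0 + real L * \<rho>} h + \<rho> * e * real L"
    using integral_telescope[OF cont, of \<rho> x0 L] rho by (simp add: sum.distrib)
  also have "integral {x0..x0 + real L * \<rho>} h \<le> \<rho> * B"
  proof -
    have "integral {x0..x0 + real L * \<rho>} h + integral {x0 + real L * \<rho>..x0 + 1} h = integral {x0..x0 + 1} h"
      using rho by (intro Henstock_Kurzweil_Integration.integral_combine integrable_continuous_interval cs) (auto simp: algebra_simps)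
    moreover have "integral {x0..x0 + 1} h = 0" using integral_periodic_shift[OF cont per x0] int0 by simp
    moreover have "- B * ((x0 + 1) - (x0 + real L * \<rho>)) \<le> integral {x0 + real L * \<rho>..x0 + 1} h"
      by (rule integral_lb_real[OF cs]) (use rho bnd in \<open>auto simp: abs_le_iff intro: add_le_imp_le_left\<close>, metis abs_le_iff minus_le_iff bnd)
    moreover have "B \<ge> 0" using bnd[of 0] by linarith
    moreover have "(x0 + 1) - (x0 + real L * \<rho>) \<le> \<rho>" using rho by (simp add: algebra_simps)
    ultimately show ?thesis using mult_left_mono[of "(x0 + 1) - (x0 + real L * \<rho>)" \<rho> B]
      by (simp add: algebra_simps)
  qed
  finally have "\<rho> * (\<Sum>l<L. h (x0 + real l * \<rho>)) \<le> \<rho> * (B + e * real L)"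
    by (simp add: algebra_simps)
  then show ?thesis using rho(1) by simp
qed


lemma weyl_upper:
  fixes h :: "real \<Rightarrow> real"
  assumes cont: "continuous_on UNIV h" and per: "\<And>x. h (x + 1) = h x"
    and irr: "\<beta> \<notin> \<rat>" and eps: "\<epsilon> > 0"
  shows "\<exists>N>0. \<forall>\<theta>. (\<Sum>j<N. h (\<theta> + real j * \<beta>)) \<le> real N * (integral {0..1} h + \<epsilon>)"
proof -
  define I where "I = integral {0..1} h"
  define g where "g = (\<lambda>x. h x - I)"
  have gcont: "continuous_on UNIV g" unfolding g_def by (intro continuous_intros cont)
  have gper: "\<And>x. g (x + 1) = g x" unfolding g_def using per by simp
  have gint: "integral {0..1} g = 0"
  proof -
    have "integral {0..1} g = integral {0..1} h - integral {0..1::real} (\<lambda>x. I)"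
    proof -
      have hi: "h integrable_on {0..1}"
        by (rule integrable_continuous_interval) (rule continuous_on_subset[OF cont], simp)
      then show ?thesis unfolding g_def
        using Henstock_Kurzweil_Integration.integral_diff[OF hi integrable_const_ivl[of I 0 1]] by simp
    qed
    then show ?thesis by (simp add: I_def)
  qed
  obtain B where B: "\<And>x. norm (g x) \<le> B" using periodic_bounded[OF gcont gper] by blast
  have B': "\<And>x. \<bar>g x\<bar> \<le> B" using B by simp
  have B0: "B \<ge> 0" using B[of 0] by (meson norm_ge_zero order_trans)
  have "uniformly_continuous_on {0..2} g"
    by (rule compact_uniformly_continuous) (auto intro: continuous_on_subset[OF gcont])
  then obtain d where d: "d > 0" "\<forall>x\<in>{0..2}. \<forall>x'\<in>{0..2}. dist x' x < d \<longrightarrow> dist (g x') (g x) < \<epsilon>/2"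
    using eps unfolding uniformly_continuous_on_def by (metis half_gt_zero)
  define \<rho>0 where "\<rho>0 = min (d/2) (1 / (2 * B / \<epsilon> + 2))"
  have r0: "\<rho>0 > 0" "\<rho>0 \<le> d/2" "\<rho>0 \<le> 1 / (2 * B / \<epsilon> + 2)"
    using d B0 eps unfolding \<rho>0_def by (auto intro!: divide_pos_pos add_nonneg_pos)
  have r01: "\<rho>0 < 1"
  proof -
    have "0 \<le> 2 * B / \<epsilon>" using B0 eps by simp
    then have "1 / (2 * B / \<epsilon> + 2) \<le> 1/2" by (intro divide_left_mono) auto
    then show ?thesis using r0 by linarith
  qed
  obtain k where k: "k > 0" "\<bar>frac (real k * \<beta>) - \<rho>0/2\<bar> < \<rho>0/2"
    using Kronecker_approx_1_explicit[OF irr, of "\<rho>0/2" "\<rho>0/2"] r0 r01 by auto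
  define s where "s = frac (real k * \<beta>)"
  define m where "m = \<lfloor>real k * \<beta>\<rfloor>"
  have s: "s > 0" "s < \<rho>0" using k(2) unfolding s_def abs_less_iff by linarith+
  have km: "real k * \<beta> = real_of_int m + s" unfolding s_def m_def frac_def by simp
  define L where "L = nat \<lfloor>1 / s\<rfloor>"
  have Ls: "real L * s \<le> 1" "1 \<le> real (Suc L) * s"
  proof -
    have L: "real L = of_int \<lfloor>1/s\<rfloor>" unfolding L_def using s by simp
    have f1: "of_int \<lfloor>1/s\<rfloor> \<le> 1/s" "1/s < of_int \<lfloor>1/s\<rfloor> + 1" by linarith+
    have ss: "s * (1/s) = 1" using s by simp
    have "s * of_int \<lfloor>1/s\<rfloor> \<le> s * (1/s)"
      using s f1 by (intro mult_left_mono) auto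
    then show "real L * s \<le> 1" using L ss by (simp only: mult.commute)
    have "s * (1/s) < s * (of_int \<lfloor>1/s\<rfloor> + 1)"
      using s f1 by (intro mult_strict_left_mono) auto
    then show "1 \<le> real (Suc L) * s" using L ss by (simp add: mult.commute add.commute)
  qed
  have LB: "B \<le> \<epsilon> / 2 * real L"
  proof -
    have "1 / s > 2 * B / \<epsilon> + 2"
    proof -
      have "s < 1 / (2 * B / \<epsilon> + 2)" using s r0 by linarith
      then show ?thesis using s B0 eps by (simp add: field_simps)
    qed
    then have "real L \<ge> 2 * B / \<epsilon>" unfolding L_def by linarith
    then show ?thesis using eps by (simp add: field_simps)
  qed
  have blk: "(\<Sum>l<L. g (x + real l * s)) \<le> B + \<epsilon>/2 * real L" for x
  proof -
    have "(\<Sum>l<L. g (x + real l * s)) = (\<Sum>l<L. g (frac x + real l * s))"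
    proof (rule sum.cong[OF refl])
      fix l
      have "g (frac x + real l * s + real_of_int \<lfloor>x\<rfloor>) = g (frac x + real l * s)"
        by (rule periodic_int[of g, OF gper])
      then show "g (x + real l * s) = g (frac x + real l * s)"
        by (simp add: frac_def algebra_simps)
    qed
    also have "\<dots> \<le> B + \<epsilon>/2 * real L"
    proof (rule riemann_bound[OF gcont gper gint B' _ s(1) Ls])
      show "frac x \<in> {0..1}" using frac_lt_1[of x] frac_ge_0[of x] by simp
      fix x y :: real assume "x \<in> {0..2}" "y \<in> {0..2}" "\<bar>x - y\<bar> \<le> s"
      then have "dist (g x) (g y) < \<epsilon>/2" using d(2) s r0 by (auto simp: dist_real_def)
      then show "\<bar>g x - g y\<bar> \<le> \<epsilon>/2" by (simp add: dist_real_def)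
    qed
    finally show ?thesis .
  qed
  define N where "N = L * k"
  have Lpos: "L > 0" using Ls s r01 by (cases L) auto
  have "(\<Sum>j<N. g (\<theta> + real j * \<beta>)) \<le> real N * \<epsilon>" for \<theta>
  proof -
    have "(\<Sum>j<N. g (\<theta> + real j * \<beta>)) = (\<Sum>l<L. \<Sum>j\<in>{l*k..<l*k+k}. g (\<theta> + real j * \<beta>))"
      unfolding N_def by (rule sum.nat_group[symmetric])
    also have "\<dots> = (\<Sum>l<L. \<Sum>r<k. g (\<theta> + real (r + l*k) * \<beta>))"
      using sum.shift_bounds_nat_ivl[of "\<lambda>j. g (\<theta> + real j * \<beta>)" 0 "l*k" k for l]
      by (simp add: atLeast0LessThan add.commute)
    also have "\<dots> = (\<Sum>r<k. \<Sum>l<L. g ((\<theta> + real r * \<beta>) + real l * s))"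
    proof -
      have eq: "g (\<theta> + real (r + l*k) * \<beta>) = g ((\<theta> + real r * \<beta>) + real l * s)" for r l
      proof -
        have e1: "real (r + l*k) * \<beta> = real r * \<beta> + real l * (real k * \<beta>)"
          by (simp add: algebra_simps)
        have "\<theta> + real (r + l*k) * \<beta> = (\<theta> + real r * \<beta> + real l * s) + real_of_int (int l * m)"
          unfolding e1 km by (simp add: algebra_simps)
        then show ?thesis using periodic_int[of g, OF gper, of "\<theta> + real r * \<beta> + real l * s" "int l * m"]
          by metis
      qed
      have "(\<Sum>l<L. \<Sum>r<k. g (\<theta> + real (r + l*k) * \<beta>)) = (\<Sum>l<L. \<Sum>r<k. g ((\<theta> + real r * \<beta>) + real l * s))"
        using eq by simp
      also have "\<dots> = (\<Sum>r<k. \<Sum>l<L. g ((\<theta> + real r * \<beta>) + real l * s))"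
        by (rule sum.swap)
      finally show ?thesis .
    qed
    also have "\<dots> \<le> (\<Sum>r<k. B + \<epsilon>/2 * real L)" by (intro sum_mono blk)
    also have "\<dots> = real k * (B + \<epsilon>/2 * real L)" by simp
    also have "\<dots> \<le> real k * (\<epsilon>/2 * real L + \<epsilon>/2 * real L)" using LB by (intro mult_left_mono) auto
    also have "\<dots> = real N * \<epsilon>" unfolding N_def by (simp add: algebra_simps)
    finally show ?thesis .
  qed
  moreover have "N > 0" unfolding N_def using Lpos k by simp
  ultimately show ?thesis
  proof (intro exI[of _ N] conjI allI)
    fix \<theta>
    assume "\<And>\<theta>. (\<Sum>j<N. g (\<theta> + real j * \<beta>)) \<le> real N * \<epsilon>"
    then have "(\<Sum>j<N. h (\<theta> + real j * \<beta>) - I) \<le> real N * \<epsilon>" unfolding g_def .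
    then show "(\<Sum>j<N. h (\<theta> + real j * \<beta>)) \<le> real N * (integral {0..1} h + \<epsilon>)"
      by (simp add: sum_subtractf I_def algebra_simps)
  qed auto
qed


lemma prod_split_block:
  fixes g :: "real \<Rightarrow> real"
  shows "(\<Prod>j<N + M. g (t + real j * \<beta>)) = (\<Prod>j<N. g (t + real j * \<beta>)) * (\<Prod>j<M. g ((t + real N * \<beta>) + real j * \<beta>))"
proof (induction M)
  case 0 then show ?case by simp
next
  case (Suc M)
  have "g (t + real (N + M) * \<beta>) = g ((t + real N * \<beta>) + real M * \<beta>)" by (simp add: algebra_simps)
  then show ?case using Suc by (simp add: algebra_simps)
qed

lemma orbit_contract:
  fixes g :: "real \<Rightarrow> real" and ds :: "nat \<Rightarrow> real"
  assumes gpos: "\<And>t. 0 \<le> g t" and gA: "\<And>t. g t \<le> A" and A1: "A \<ge> 1" and Npos: "N > 0"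
    and lam: "\<And>t. (\<Prod>j<N. g (t + real j * \<beta>)) \<le> lm" and lam1: "lm < 1"
    and ds0: "ds 0 \<le> \<delta> / A^N" and dsnn: "\<And>k. 0 \<le> ds k"
    and step: "\<And>k. ds k \<le> \<delta> \<Longrightarrow> ds (Suc k) \<le> g (\<theta> + real k * \<beta>) * ds k"
  shows "ds \<longlonglongrightarrow> 0"
proof -
  have lam0: "lm \<ge> 0" using lam[of 0] prod_nonneg[of "{..<N}" "\<lambda>j. g (0 + real j * \<beta>)"] gpos by force
  have PB: "\<forall>t. (\<Prod>j<q*N + r. g (t + real j * \<beta>)) \<le> lm^q * A^r" for q r
  proof (induction q)
    case 0
    show ?case
    proof
      fix t
      have "(\<Prod>j<r. g (t + real j * \<beta>)) \<le> (\<Prod>j<r. A)" by (intro prod_mono) (use gpos gA in auto)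
      then show "(\<Prod>j<0*N + r. g (t + real j * \<beta>)) \<le> lm^0 * A^r" by simp
    qed
  next
    case (Suc q)
    show ?case
    proof
      fix t
      have "(\<Prod>j<Suc q*N + r. g (t + real j * \<beta>)) = (\<Prod>j<N + (q*N + r). g (t + real j * \<beta>))"
        by (simp add: algebra_simps)
      also have "\<dots> = (\<Prod>j<N. g (t + real j * \<beta>)) * (\<Prod>j<q*N + r. g ((t + real N * \<beta>) + real j * \<beta>))"
        by (rule prod_split_block)
      also have "\<dots> \<le> lm * (lm^q * A^r)"
        by (intro mult_mono lam Suc[rule_format] prod_nonneg) (use gpos lam0 in auto)
      finally show "(\<Prod>j<Suc q*N + r. g (t + real j * \<beta>)) \<le> lm^Suc q * A^r" by simp
    qed
  qed
  define P where "P k = (\<Prod>j<k. g (\<theta> + real j * \<beta>))" for k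
  have Pb: "P k \<le> lm^(k div N) * A^N" for k
  proof -
    have "P k = (\<Prod>j<(k div N)*N + k mod N. g (\<theta> + real j * \<beta>))" unfolding P_def by simp
    also have "\<dots> \<le> lm^(k div N) * A^(k mod N)" using PB by blast
    also have "\<dots> \<le> lm^(k div N) * A^N"
      using A1 Npos lam0 by (intro mult_left_mono power_increasing) auto
    finally show ?thesis .
  qed
  have lp1: "lm^q \<le> 1" for q using lam0 lam1 by (simp add: power_le_one)
  have AN: "A^N > 0" using A1 by simp
  have dsb: "ds k \<le> P k * ds 0" for k
  proof (induction k)
    case 0 then show ?case by (simp add: P_def)
  next
    case (Suc k)
    have "P k * ds 0 \<le> A^N * ds 0"
      using Pb[of k] lp1[of "k div N"] dsnn[of 0] AN
      by (intro mult_right_mono) (auto intro: order_trans mult_right_mono[of _ 1 "A^N", simplified])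
    also have "\<dots> \<le> A^N * (\<delta> / A^N)" using ds0 AN by (intro mult_left_mono) auto
    also have "\<dots> = \<delta>" using A1 by simp
    finally have "ds k \<le> \<delta>" using Suc by linarith
    then have "ds (Suc k) \<le> g (\<theta> + real k * \<beta>) * ds k" by (rule step)
    also have "\<dots> \<le> g (\<theta> + real k * \<beta>) * (P k * ds 0)" using Suc gpos by (intro mult_left_mono) auto
    also have "\<dots> = P (Suc k) * ds 0" unfolding P_def by (simp add: algebra_simps)
    finally show ?case .
  qed
  have ub: "ds k \<le> lm^(k div N) * (A^N * ds 0)" for k
  proof -
    have "ds k \<le> P k * ds 0" by (rule dsb)
    also have "\<dots> \<le> lm^(k div N) * A^N * ds 0" using Pb dsnn[of 0] by (intro mult_right_mono) auto
    finally show ?thesis by (simp add: mult.assoc)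
  qed
  have "(\<lambda>q. lm^q) \<longlonglongrightarrow> 0" using lam0 lam1 by (intro LIMSEQ_power_zero) auto
  then have "(\<lambda>k. lm^(k div N)) \<longlonglongrightarrow> 0"
    by (rule filterlim_compose) (rule filterlim_at_top_div_const_nat[OF Npos])
  then have "(\<lambda>k. lm^(k div N) * (A^N * ds 0)) \<longlonglongrightarrow> 0 * (A^N * ds 0)"
    by (intro tendsto_mult tendsto_const)
  then have lim: "(\<lambda>k. lm^(k div N) * (A^N * ds 0)) \<longlonglongrightarrow> 0" by simp
  show ?thesis
    by (rule tendsto_sandwich[of "\<lambda>_. 0" ds sequentially "\<lambda>k. lm^(k div N) * (A^N * ds 0)" 0, OF _ _ tendsto_const lim])
       (use dsnn ub in auto)
qed

lemma neg_majorant: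
  fixes a :: "real \<Rightarrow> real"
  assumes acont: "continuous_on UNIV a" and anz: "\<And>t. a t \<ge> 0"
    and fint: "integrable (lebesgue_on {0..1}) (\<lambda>t. ln (a t))"
    and fneg: "integral\<^sup>L (lebesgue_on {0..1}) (\<lambda>t. ln (a t)) < 0"
    and C: "C > 0" and dm: "dmax > 0" "C * dmax \<le> 1"
  shows "\<exists>\<delta>. 0 < \<delta> \<and> \<delta> \<le> dmax \<and> integral {0..1} (\<lambda>t. ln (a t + C * \<delta>)) < 0"
proof -
  define dl where "dl m = dmax / (real m + 1)" for m :: nat
  have dl: "0 < dl m" "dl m \<le> dmax" for m
    unfolding dl_def using dm by (auto simp: field_simps)
  define H where "H m t = ln (a t + C * dl m)" for m t
  define K where "K m t = max (ln (a t)) (H m t)" for m t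
  have Hcont: "continuous_on {0..1} (H m)" for m
  proof -
    have "continuous_on {0..1} (\<lambda>t. a t + C * dl m)"
      by (intro continuous_intros continuous_on_subset[OF acont]) auto
    moreover have "\<forall>t\<in>{0..1}. a t + C * dl m \<noteq> 0"
    proof
      fix t show "a t + C * dl m \<noteq> 0" using anz[of t] C dl[of m] add_nonneg_pos[of "a t" "C * dl m"] by simp
    qed
    ultimately show ?thesis unfolding H_def by (intro continuous_on_ln) auto
  qed
  have Hint: "integrable (lebesgue_on {0..1}) (H m)" for m
    by (rule continuous_imp_integrable_real[OF Hcont])
  have Wcont: "continuous_on {0..1} (\<lambda>t. ln (a t + C * dmax))"
  proof -
    have "continuous_on {0..1} (\<lambda>t. a t + C * dmax)"
      by (intro continuous_intros continuous_on_subset[OF acont]) auto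
    moreover have "\<forall>t\<in>{0..1}. a t + C * dmax \<noteq> 0"
    proof
      fix t show "a t + C * dmax \<noteq> 0" using anz[of t] C dm add_nonneg_pos[of "a t" "C * dmax"] by simp
    qed
    ultimately show ?thesis by (intro continuous_on_ln) auto
  qed
  define w where "w t = \<bar>ln (a t)\<bar> + \<bar>ln (a t + C * dmax)\<bar>" for t
  have wint: "integrable (lebesgue_on {0..1}) w"
    unfolding w_def by (intro Bochner_Integration.integrable_add integrable_abs fint continuous_imp_integrable_real[OF Wcont])
  have Kmeas: "K m \<in> borel_measurable (lebesgue_on {0..1})" for m
    unfolding K_def using borel_measurable_integrable[OF fint] borel_measurable_integrable[OF Hint[of m]]
    by (intro borel_measurable_max) auto
  have Klim: "(\<lambda>m. K m t) \<longlonglongrightarrow> ln (a t)" for t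
  proof (cases "a t = 0")
    case True
    have "K m t = ln (a t)" for m
    proof -
      have "C * dl m \<le> 1" using dl[of m] C dm by (meson mult_left_mono less_imp_le order_trans)
      then have "ln (C * dl m) \<le> 0" using C dl[of m] by simp
      then show ?thesis unfolding K_def H_def using True by simp
    qed
    then show ?thesis by simp
  next
    case False
    then have apos: "a t > 0" using anz[of t] by simp
    have "K m t = H m t" for m
    proof -
      have "ln (a t) \<le> ln (a t + C * dl m)"
      using apos C dl[of m] by (subst ln_le_cancel_iff) (auto intro: add_pos_pos)
      then show ?thesis unfolding K_def H_def by simp
    qed
    moreover have "(\<lambda>m. H m t) \<longlonglongrightarrow> ln (a t + C * 0)"
    proof -
      have "(\<lambda>m. dmax / real m) \<longlonglongrightarrow> 0" by (rule lim_const_over_n)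
      then have "(\<lambda>m. dmax / real (Suc m)) \<longlonglongrightarrow> 0" by (rule LIMSEQ_Suc)
      then have "dl \<longlonglongrightarrow> 0" unfolding dl_def by (simp add: add.commute)
      then have "(\<lambda>m. a t + C * dl m) \<longlonglongrightarrow> a t + C * 0" by (intro tendsto_intros)
      then show ?thesis unfolding H_def using apos by (intro tendsto_ln) auto
    qed
    ultimately show ?thesis by simp
  qed
  have Kb: "norm (K m t) \<le> w t" for m t
  proof (cases "a t = 0")
    case True
    have "C * dl m \<le> 1" using dl[of m] C dm by (meson mult_left_mono less_imp_le order_trans)
    then have "ln (C * dl m) \<le> 0" using C dl[of m] by simp
    then show ?thesis unfolding K_def H_def w_def using True by simp
  next
    case False
    then have apos: "a t > 0" using anz[of t] by simp
    have "ln (a t) \<le> ln (a t + C * dl m)"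
      using apos C dl[of m] by (subst ln_le_cancel_iff) (auto intro: add_pos_pos)
    moreover have "ln (a t + C * dl m) \<le> ln (a t + C * dmax)"
      using apos C dl[of m] dm by (subst ln_le_cancel_iff) (auto intro: add_pos_pos)
    ultimately show ?thesis unfolding K_def H_def w_def by auto
  qed
  have "(\<lambda>m. integral\<^sup>L (lebesgue_on {0..1}) (K m)) \<longlonglongrightarrow> integral\<^sup>L (lebesgue_on {0..1}) (\<lambda>t. ln (a t))"
    by (rule integral_dominated_convergence[OF borel_measurable_integrable[OF fint] Kmeas wint])
       (use Klim Kb in auto)
  then have "eventually (\<lambda>m. integral\<^sup>L (lebesgue_on {0..1}) (K m) < 0) sequentially"
    using fneg by (rule order_tendstoD)
  then obtain m where m: "integral\<^sup>L (lebesgue_on {0..1}) (K m) < 0" by (auto simp: eventually_sequentially)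
  have Kint: "integrable (lebesgue_on {0..1}) (K m)"
    by (rule Bochner_Integration.integrable_bound[OF wint Kmeas]) (use Kb in \<open>auto intro!: AE_I2 intro: order_trans[OF _ abs_ge_self]\<close>)
  have "integral {0..1} (H m) = integral\<^sup>L (lebesgue_on {0..1}) (H m)"
    by (rule lebesgue_integral_eq_integral[OF Hint, symmetric]) auto
  also have "\<dots> \<le> integral\<^sup>L (lebesgue_on {0..1}) (K m)"
    by (rule integral_mono[OF Hint Kint]) (simp add: K_def)
  finally have "integral {0..1} (H m) < 0" using m by linarith
  then show ?thesis using dl[of m] unfolding H_def by blast
qed


lemma fibred_map_iter_fst:
  "fst ((fibred_map \<alpha> p ^^ k) w) = fst w + real k * \<alpha>"
proof (induction k)
  case 0 then show ?case by simp
next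
  case (Suc k)
  have "fst ((fibred_map \<alpha> p ^^ Suc k) w) = fst ((fibred_map \<alpha> p ^^ k) w) + \<alpha>"
    by (simp add: fibred_map_def case_prod_beta)
  then show ?case using Suc by (simp add: algebra_simps)
qed

lemma fibred_map_iter_snd:
  "snd ((fibred_map \<alpha> p ^^ Suc k) w) = poly (p (fst w + real k * \<alpha>)) (snd ((fibred_map \<alpha> p ^^ k) w))"
proof -
  have "snd ((fibred_map \<alpha> p ^^ Suc k) w) = poly (p (fst ((fibred_map \<alpha> p ^^ k) w))) (snd ((fibred_map \<alpha> p ^^ k) w))"
    by (simp add: fibred_map_def case_prod_beta)
  then show ?thesis by (simp add: fibred_map_iter_fst)
qed

lemma fibred_map_cont:
  fixes p :: "real \<Rightarrow> complex poly"
  assumes "\<And>k. continuous_on UNIV (\<lambda>\<theta>. coeff (p \<theta>) k)" "\<And>\<theta>. degree (p \<theta>) \<le> d"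
  shows "continuous_on UNIV (fibred_map \<alpha> p ^^ k)"
proof (induction k)
  case 0 then show ?case by (simp add: continuous_on_id)
next
  case (Suc k)
  have eq: "fibred_map \<alpha> p = (\<lambda>w. (fst w + \<alpha>, poly (p (fst w)) (snd w)))"
    by (auto simp: fibred_map_def case_prod_beta)
  have c: "continuous_on UNIV (fibred_map \<alpha> p)"
    unfolding eq by (intro continuous_on_Pair continuous_intros poly_family_cont[OF assms])
  have "continuous_on UNIV (fibred_map \<alpha> p \<circ> (fibred_map \<alpha> p ^^ k))"
    by (rule continuous_on_compose[OF Suc continuous_on_subset[OF c]]) auto
  then show ?case by (simp only: funpow.simps(2))
qed

lemma contraction_region:
  fixes p :: "real \<Rightarrow> complex poly" and \<gamma> :: "real \<Rightarrow> complex" and a :: "real \<Rightarrow> real"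
  assumes pint: "\<And>y m. p (y + real_of_int m) = p y"
    and pfrac: "\<And>y. p (frac y) = p y"
    and nb: "real n * \<beta> = \<alpha> + real \<tau>"
    and inv: "\<And>\<theta>. poly (p (frac (real n * \<theta>))) (\<gamma> \<theta>) = \<gamma> (\<theta> + \<beta>)"
    and TF: "\<And>\<theta> z. cmod (z - \<gamma> \<theta>) \<le> 1 \<Longrightarrow>
        cmod (poly (p (frac (real n * \<theta>))) z - poly (p (frac (real n * \<theta>))) (\<gamma> \<theta>))
          \<le> (a \<theta> + C * cmod (z - \<gamma> \<theta>)) * cmod (z - \<gamma> \<theta>)"
    and anz: "\<And>t. 0 \<le> a t" and C: "C > 0" and del: "0 < \<delta>" "\<delta> \<le> 1"
    and aA: "\<And>t. a t + C * \<delta> \<le> A" and A1: "A \<ge> 1" and Npos: "N > 0"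
    and lam: "\<And>t. (\<Prod>j<N. a (t + real j * \<beta>) + C * \<delta>) \<le> lm" and lm1: "lm < 1"
    and xm: "x - real n * \<theta> \<in> \<int>" and dz: "cmod (z - \<gamma> \<theta>) \<le> \<delta> / A^N"
  shows "(x, z) \<in> basin \<alpha> p (ncurve_lift n \<gamma>)"
proof -
  obtain m where xm': "x - real n * \<theta> = real_of_int m" using xm by (metis Ints_cases)
  define zs where "zs k = snd ((fibred_map \<alpha> p ^^ k) (x, z))" for k
  define ds where "ds k = cmod (zs k - \<gamma> (\<theta> + real k * \<beta>))" for k
  have lin: "x + real k * \<alpha> = real n * (\<theta> + real k * \<beta>) + real_of_int (m - int k * int \<tau>)" for k
  proof -
    have "real n * (\<theta> + real k * \<beta>) = real n * \<theta> + real k * (real n * \<beta>)"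
      by (simp add: algebra_simps)
    also have "\<dots> = real n * \<theta> + real k * (\<alpha> + real \<tau>)" by (simp only: nb)
    finally show ?thesis using xm' by (simp add: algebra_simps)
  qed
  have pk: "p (x + real k * \<alpha>) = p (frac (real n * (\<theta> + real k * \<beta>)))" for k
    unfolding lin pint pfrac ..
  have zsS: "zs (Suc k) = poly (p (frac (real n * (\<theta> + real k * \<beta>)))) (zs k)" for k
    using fibred_map_iter_snd[where \<alpha>=\<alpha> and p=p and k=k and w="(x, z)"] pk[of k] unfolding zs_def by simp
  have gS: "\<gamma> (\<theta> + real (Suc k) * \<beta>) = poly (p (frac (real n * (\<theta> + real k * \<beta>)))) (\<gamma> (\<theta> + real k * \<beta>))" for k
    using inv[of "\<theta> + real k * \<beta>"] by (simp add: algebra_simps)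
  have step: "ds (Suc k) \<le> (a (\<theta> + real k * \<beta>) + C * \<delta>) * ds k" if "ds k \<le> \<delta>" for k
  proof -
    have "ds (Suc k) \<le> (a (\<theta> + real k * \<beta>) + C * ds k) * ds k"
      unfolding ds_def zsS gS by (rule TF) (use that del in \<open>simp add: ds_def\<close>)
    also have "\<dots> \<le> (a (\<theta> + real k * \<beta>) + C * \<delta>) * ds k"
      using that C by (intro mult_right_mono add_left_mono mult_left_mono) (auto simp: ds_def)
    finally show ?thesis .
  qed
  have dslim: "ds \<longlonglongrightarrow> 0"
  proof (rule orbit_contract[of "\<lambda>t. a t + C * \<delta>" A N \<beta> lm ds \<delta> \<theta>])
    show "\<And>t. 0 \<le> a t + C * \<delta>" using anz C del by (simp add: add_nonneg_nonneg)
    show "ds 0 \<le> \<delta> / A ^ N" using dz by (simp add: ds_def zs_def)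
    show "\<And>k. 0 \<le> ds k" by (simp add: ds_def)
  qed (use aA A1 Npos lam lm1 step in auto)
  have mem: "(x + real k * \<alpha>, \<gamma> (\<theta> + real k * \<beta>)) \<in> ncurve_lift n \<gamma>" for k
  proof -
    have "x + real k * \<alpha> - real n * (\<theta> + real k * \<beta>) \<in> \<int>" using lin[of k] by simp
    then show ?thesis unfolding ncurve_lift_def by blast
  qed
  have Fk: "(fibred_map \<alpha> p ^^ k) (x, z) = (x + real k * \<alpha>, zs k)" for k
    unfolding zs_def by (rule prod_eqI) (simp_all add: fibred_map_iter_fst)
  have ub: "infdist ((fibred_map \<alpha> p ^^ k) (x, z)) (ncurve_lift n \<gamma>) \<le> ds k" for k
  proof -
    have "infdist ((fibred_map \<alpha> p ^^ k) (x, z)) (ncurve_lift n \<gamma>)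
        \<le> dist ((fibred_map \<alpha> p ^^ k) (x, z)) (x + real k * \<alpha>, \<gamma> (\<theta> + real k * \<beta>))"
      by (rule infdist_le[OF mem])
    also have "\<dots> = ds k" unfolding Fk ds_def by (simp add: dist_Pair_Pair dist_norm)
    finally show ?thesis .
  qed
  show ?thesis unfolding basin_def mem_Collect_eq
    by (rule tendsto_sandwich[of "\<lambda>_. 0" _ sequentially ds 0, OF _ _ tendsto_const dslim])
       (use ub in \<open>auto simp: infdist_nonneg\<close>)
qed


theorem mainTheorem5:
  fixes \<alpha> :: real and p :: "real \<Rightarrow> complex poly" and n :: nat and \<gamma> :: "real \<Rightarrow> complex"
  assumes "fibred_poly_dyn \<alpha> p"
    and "n \<ge> 1"
    and "circle_embedding \<gamma>"
    and "invariant_ncurve p \<alpha> n \<gamma>"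
    and "attracting_ncurve p n \<gamma>"
  shows "open (basin \<alpha> p (ncurve_lift n \<gamma>))"
proof -
  obtain d where irr: "\<alpha> \<notin> \<rat>" and pper: "\<And>\<theta>. p (\<theta> + 1) = p \<theta>"
    and pcoef: "\<And>k. continuous_on UNIV (\<lambda>\<theta>. coeff (p \<theta>) k)" and deg: "\<And>\<theta>. degree (p \<theta>) \<le> d"
    using assms(1) unfolding fibred_poly_dyn_def by blast
  have gcont: "continuous_on UNIV \<gamma>" and gper: "\<And>\<theta>. \<gamma> (\<theta> + 1) = \<gamma> \<theta>"
    using assms(3) unfolding circle_embedding_def by auto
  obtain \<tau> where inv0: "\<And>\<theta>. poly (p (frac (real n * \<theta>))) (\<gamma> \<theta>) = \<gamma> (\<theta> + (\<alpha> + real \<tau>) / real n)"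
    using assms(4) unfolding invariant_ncurve_def by blast
  define a where "a \<theta> = cmod (poly (pderiv (p (frac (real n * \<theta>)))) (\<gamma> \<theta>))" for \<theta>
  have fint: "integrable (lebesgue_on {0..1}) (\<lambda>\<theta>. ln (a \<theta>))"
    and fexp: "exp (integral\<^sup>L (lebesgue_on {0..1}) (\<lambda>\<theta>. ln (a \<theta>))) < 1"
    using assms(5) unfolding attracting_ncurve_def Let_def a_def by auto
  have fneg: "integral\<^sup>L (lebesgue_on {0..1}) (\<lambda>\<theta>. ln (a \<theta>)) < 0"
    using fexp by simp
  have pint: "\<And>y m. p (y + real_of_int m) = p y" using periodic_int[of p, OF pper] by blast
  have pfrac: "\<And>y. p (frac y) = p y" using periodic_frac[of p, OF pper] by blast
  have npos: "real n > 0" using assms(2) by simp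
  define \<beta> where "\<beta> = (\<alpha> + real \<tau>) / real n"
  have nb: "real n * \<beta> = \<alpha> + real \<tau>" unfolding \<beta>_def using npos by simp
  have inv: "\<And>\<theta>. poly (p (frac (real n * \<theta>))) (\<gamma> \<theta>) = \<gamma> (\<theta> + \<beta>)" using inv0 unfolding \<beta>_def .
  have birr: "\<beta> \<notin> \<rat>"
  proof
    assume "\<beta> \<in> \<rat>"
    then have "real n * \<beta> - real \<tau> \<in> \<rat>" by (intro Rats_diff Rats_mult) auto
    then show False using irr nb by simp
  qed
  have a_alt: "a \<theta> = cmod (poly (pderiv (p (real n * \<theta>))) (\<gamma> \<theta>))" for \<theta>
    unfolding a_def pfrac ..
  have pdcont: "continuous_on UNIV (\<lambda>w. poly (pderiv (p (fst w))) (snd w))"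
  proof (rule poly_family_cont[where d=d])
    fix k show "continuous_on UNIV (\<lambda>\<theta>. coeff (pderiv (p \<theta>)) k)"
      unfolding coeff_pderiv by (intro continuous_intros pcoef)
  next
    fix \<theta> show "degree (pderiv (p \<theta>)) \<le> d" using deg[of \<theta>] by (simp add: degree_pderiv)
  qed
  have acont: "continuous_on UNIV a"
  proof -
    have "continuous_on UNIV (\<lambda>\<theta>. (real n * \<theta>, \<gamma> \<theta>))" by (intro continuous_intros gcont)
    then have "continuous_on UNIV ((\<lambda>w. poly (pderiv (p (fst w))) (snd w)) \<circ> (\<lambda>\<theta>. (real n * \<theta>, \<gamma> \<theta>)))"
      by (rule continuous_on_compose) (rule continuous_on_subset[OF pdcont], simp)
    then have "continuous_on UNIV (\<lambda>\<theta>. norm (((\<lambda>w. poly (pderiv (p (fst w))) (snd w)) \<circ> (\<lambda>\<theta>. (real n * \<theta>, \<gamma> \<theta>))) \<theta>))"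
      by (rule continuous_on_norm)
    moreover have "a = (\<lambda>\<theta>. norm (((\<lambda>w. poly (pderiv (p (fst w))) (snd w)) \<circ> (\<lambda>\<theta>. (real n * \<theta>, \<gamma> \<theta>))) \<theta>))"
      by (auto simp: a_alt)
    ultimately show ?thesis by simp
  qed
  have aper: "a (\<theta> + 1) = a \<theta>" for \<theta>
  proof -
    have "p (real n * (\<theta> + 1)) = p (real n * \<theta>)"
      using pint[of "real n * \<theta>" "int n"] by (simp add: algebra_simps)
    then show ?thesis unfolding a_alt using gper by simp
  qed
  have anz: "\<And>t. 0 \<le> a t" unfolding a_def by simp
  define cs where "cs \<theta> = (\<Sum>i\<le>d. cmod (coeff (p \<theta>) i))" for \<theta>
  have cscont: "continuous_on UNIV cs" unfolding cs_def by (intro continuous_intros pcoef)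
  have csper: "cs (\<theta> + 1) = cs \<theta>" for \<theta> unfolding cs_def using pper by simp
  obtain Bc0 where Bc0: "\<And>\<theta>. norm (cs \<theta>) \<le> Bc0" using periodic_bounded[OF cscont csper] by blast
  have Bc: "cmod (coeff (p \<theta>) i) \<le> Bc0" for \<theta> i
  proof (cases "i \<le> d")
    case True
    then have "cmod (coeff (p \<theta>) i) \<le> cs \<theta>" unfolding cs_def by (intro member_le_sum) auto
    also have "\<dots> \<le> Bc0" using Bc0[of \<theta>] by simp
    finally show ?thesis .
  next
    case False
    then have "coeff (p \<theta>) i = 0" using deg[of \<theta>] by (intro coeff_eq_0) simp
    then show ?thesis using Bc0[of \<theta>] by (simp add: order_trans[OF norm_ge_zero])
  qed
  have Bc00: "Bc0 \<ge> 0" using Bc[of 0 0] by (meson norm_ge_zero order_trans)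
  obtain Rg where Rg: "\<And>\<theta>. norm (\<gamma> \<theta>) \<le> Rg" using periodic_bounded[OF gcont gper] by blast
  have Rg0: "Rg \<ge> 0" using Rg[of 0] by (meson norm_ge_zero order_trans)
  define R where "R = Rg + 1"
  define C0 where "C0 = (\<Sum>i\<le>d. Bc0 * real i^2 * R^i)"
  have C00: "C0 \<ge> 0" unfolding C0_def R_def using Bc00 Rg0 by (intro sum_nonneg) auto
  define C where "C = C0 + 1"
  have Cpos: "C > 0" unfolding C_def using C00 by simp
  have TF: "cmod (poly (p (frac (real n * \<theta>))) z - poly (p (frac (real n * \<theta>))) (\<gamma> \<theta>))
          \<le> (a \<theta> + C * cmod (z - \<gamma> \<theta>)) * cmod (z - \<gamma> \<theta>)" if zc: "cmod (z - \<gamma> \<theta>) \<le> 1" for \<theta> z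
  proof -
    define P where "P = p (frac (real n * \<theta>))"
    define v where "v = \<gamma> \<theta>"
    have vR: "cmod v \<le> R" unfolding v_def R_def using Rg[of \<theta>] by simp
    have zR: "cmod z \<le> R"
    proof -
      have "cmod z \<le> cmod v + cmod (z - v)" by (metis norm_triangle_sub add.commute)
      then show ?thesis using zc Rg[of \<theta>] unfolding v_def R_def by simp
    qed
    have T: "cmod (poly P z - poly P v - poly (pderiv P) v * (z - v)) \<le> C0 * cmod (z - v)^2"
      unfolding C0_def P_def
      by (rule poly_taylor2[OF deg Bc]) (use vR zR in \<open>auto simp: R_def Rg0\<close>)
    have "cmod (poly P z - poly P v) \<le> cmod (poly (pderiv P) v * (z - v)) + cmod (poly P z - poly P v - poly (pderiv P) v * (z - v))"
      by (rule norm_triangle_sub)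
    also have "\<dots> \<le> a \<theta> * cmod (z - v) + C0 * cmod (z - v)^2"
      using T unfolding a_def P_def v_def by (simp add: norm_mult)
    also have "\<dots> \<le> (a \<theta> + C * cmod (z - v)) * cmod (z - v)"
      unfolding C_def by (simp add: algebra_simps power2_eq_square)
    finally show ?thesis unfolding P_def v_def .
  qed
  define dmax where "dmax = min 1 (1 / C)"
  have dm: "dmax > 0" "C * dmax \<le> 1"
  proof -
    show "dmax > 0" unfolding dmax_def using Cpos by simp
    have "C * dmax \<le> C * (1 / C)" unfolding dmax_def using Cpos by (intro mult_left_mono) auto
    then show "C * dmax \<le> 1" using Cpos by simp
  qed
  obtain \<delta> where del: "0 < \<delta>" "\<delta> \<le> dmax" and Ineg: "integral {0..1} (\<lambda>t. ln (a t + C * \<delta>)) < 0"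
    using neg_majorant[OF acont anz fint fneg Cpos dm] by blast
  have del1: "\<delta> \<le> 1" using del unfolding dmax_def by simp
  define I where "I = integral {0..1} (\<lambda>t. ln (a t + C * \<delta>))"
  have gpos: "a t + C * \<delta> > 0" for t using anz[of t] Cpos del add_nonneg_pos[of "a t" "C * \<delta>"] by simp
  have hcont: "continuous_on UNIV (\<lambda>t. ln (a t + C * \<delta>))"
  proof -
    have "continuous_on UNIV (\<lambda>t. a t + C * \<delta>)" by (intro continuous_intros acont)
    then show ?thesis using gpos by (intro continuous_on_ln) (auto simp: less_imp_neq[symmetric])
  qed
  have hper: "\<And>x. ln (a (x + 1) + C * \<delta>) = ln (a x + C * \<delta>)" using aper by simp
  obtain N where Npos: "N > 0" and S: "\<And>\<theta>. (\<Sum>j<N. ln (a (\<theta> + real j * \<beta>) + C * \<delta>)) \<le> real N * (I + - I / 2)"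
    using weyl_upper[OF hcont hper birr, of "- I / 2"] Ineg unfolding I_def by auto
  define lm where "lm = exp (real N * (I / 2))"
  have lm1: "lm < 1" unfolding lm_def using Npos Ineg unfolding I_def[symmetric]
    by (simp add: mult_pos_neg)
  have lam: "(\<Prod>j<N. a (t + real j * \<beta>) + C * \<delta>) \<le> lm" for t
  proof -
    have "(\<Prod>j<N. a (t + real j * \<beta>) + C * \<delta>) = (\<Prod>j<N. exp (ln (a (t + real j * \<beta>) + C * \<delta>)))"
      using gpos by simp
    also have "\<dots> = exp (\<Sum>j<N. ln (a (t + real j * \<beta>) + C * \<delta>))" by (simp add: exp_sum)
    also have "\<dots> \<le> lm" unfolding lm_def using S[of t] by simp
    finally show ?thesis .
  qed
  obtain Ba where Ba: "\<And>t. norm (a t) \<le> Ba" using periodic_bounded[OF acont aper] by blast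
  define A where "A = max 1 (Ba + C * \<delta>)"
  have aA: "a t + C * \<delta> \<le> A" for t unfolding A_def using Ba[of t] by simp
  have A1: "A \<ge> 1" unfolding A_def by simp
  define \<eta> where "\<eta> = \<delta> / A^N"
  have eta: "\<eta> > 0" unfolding \<eta>_def using del A1 by simp
  have CR: "(x, z) \<in> basin \<alpha> p (ncurve_lift n \<gamma>)"
    if "x - real n * \<theta> \<in> \<int>" "cmod (z - \<gamma> \<theta>) \<le> \<eta>" for x z \<theta>
    by (rule contraction_region[OF pint pfrac nb inv TF anz Cpos del(1) del1 aA A1 Npos lam lm1])
       (use that in \<open>auto simp: \<eta>_def\<close>)
  obtain \<rho> where rho: "\<rho> > 0" "\<And>s t. \<bar>s - t\<bar> < \<rho> \<Longrightarrow> dist (\<gamma> s) (\<gamma> t) < \<eta> / 2"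
    using periodic_unif_cont[OF gcont gper, of "\<eta> / 2"] eta by auto
  define \<epsilon>0 where "\<epsilon>0 = min (\<eta> / 2) (real n * \<rho>)"
  have e0: "\<epsilon>0 > 0" unfolding \<epsilon>0_def using eta npos rho by simp
  have NE: "ncurve_lift n \<gamma> \<noteq> {}"
  proof -
    have "(0, \<gamma> 0) \<in> ncurve_lift n \<gamma>" unfolding ncurve_lift_def by force
    then show ?thesis by blast
  qed
  have NB: "w \<in> basin \<alpha> p (ncurve_lift n \<gamma>)" if wi: "infdist w (ncurve_lift n \<gamma>) < \<epsilon>0" for w
  proof -
    obtain y where y: "y \<in> ncurve_lift n \<gamma>" "dist w y < \<epsilon>0"
      using wi NE by (auto simp: infdist_notempty cINF_less_iff)
    obtain x' \<theta>' where y': "y = (x', \<gamma> \<theta>')" "x' - real n * \<theta>' \<in> \<int>"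
      using y(1) unfolding ncurve_lift_def by blast
    obtain x z where w: "w = (x, z)" by (cases w)
    define \<theta> where "\<theta> = \<theta>' + (x - x') / real n"
    have "x - real n * \<theta> = x' - real n * \<theta>'" unfolding \<theta>_def using npos by (simp add: field_simps)
    then have xin: "x - real n * \<theta> \<in> \<int>" using y' by simp
    have dx: "\<bar>x - x'\<bar> < real n * \<rho>"
      using dist_fst_le[of w y] y(2) unfolding w y' \<epsilon>0_def by (simp add: dist_real_def)
    have "\<bar>\<theta> - \<theta>'\<bar> = \<bar>x - x'\<bar> / real n" unfolding \<theta>_def using npos by simp
    also have "\<dots> < \<rho>" using dx npos by (simp add: field_simps)
    finally have "dist (\<gamma> \<theta>) (\<gamma> \<theta>') < \<eta> / 2" by (rule rho(2))
    moreover have "cmod (z - \<gamma> \<theta>') < \<eta> / 2"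
      using dist_snd_le[of w y] y(2) unfolding w y' \<epsilon>0_def by (simp add: dist_norm)
    ultimately have "cmod (z - \<gamma> \<theta>) \<le> \<eta>"
      using norm_triangle_ineq[of "z - \<gamma> \<theta>'" "\<gamma> \<theta>' - \<gamma> \<theta>"]
      by (simp add: dist_norm norm_minus_commute)
    then show ?thesis unfolding w using CR[OF xin] by blast
  qed
  have Fcont: "continuous_on UNIV (fibred_map \<alpha> p ^^ k)" for k
    by (rule fibred_map_cont[OF pcoef deg])
  show ?thesis
  proof (rule open_subopen[THEN iffD2], intro ballI)
    fix w assume "w \<in> basin \<alpha> p (ncurve_lift n \<gamma>)"
    then have "(\<lambda>k. infdist ((fibred_map \<alpha> p ^^ k) w) (ncurve_lift n \<gamma>)) \<longlonglongrightarrow> 0"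
      unfolding basin_def by simp
    then have "eventually (\<lambda>k. infdist ((fibred_map \<alpha> p ^^ k) w) (ncurve_lift n \<gamma>) < \<epsilon>0) sequentially"
      using e0 by (rule order_tendstoD)
    then obtain k where k: "infdist ((fibred_map \<alpha> p ^^ k) w) (ncurve_lift n \<gamma>) < \<epsilon>0"
      by (auto simp: eventually_sequentially)
    define T where "T = (\<lambda>w'. infdist ((fibred_map \<alpha> p ^^ k) w') (ncurve_lift n \<gamma>)) -` {..<\<epsilon>0}"
    have "open T" unfolding T_def
      by (rule open_vimage[OF open_lessThan]) (rule continuous_on_infdist[OF Fcont])
    moreover have "w \<in> T" unfolding T_def using k by simp
    moreover have "T \<subseteq> basin \<alpha> p (ncurve_lift n \<gamma>)"
    proof
      fix w' assume "w' \<in> T"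
      then have "(fibred_map \<alpha> p ^^ k) w' \<in> basin \<alpha> p (ncurve_lift n \<gamma>)"
        unfolding T_def by (intro NB) simp
      then have "(\<lambda>j. infdist ((fibred_map \<alpha> p ^^ j) ((fibred_map \<alpha> p ^^ k) w')) (ncurve_lift n \<gamma>)) \<longlonglongrightarrow> 0"
        unfolding basin_def by simp
      then have "(\<lambda>j. infdist ((fibred_map \<alpha> p ^^ (j + k)) w') (ncurve_lift n \<gamma>)) \<longlonglongrightarrow> 0"
        by (simp add: funpow_add)
      then have "(\<lambda>j. infdist ((fibred_map \<alpha> p ^^ j) w') (ncurve_lift n \<gamma>)) \<longlonglongrightarrow> 0"
        by (rule LIMSEQ_offset)
      then show "w' \<in> basin \<alpha> p (ncurve_lift n \<gamma>)" unfolding basin_def by simp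
    qed
    ultimately show "\<exists>T. open T \<and> w \<in> T \<and> T \<subseteq> basin \<alpha> p (ncurve_lift n \<gamma>)" by blast
  qed
qed


end
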